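(* Let $X$ be a locally compact Polish space and $\{B_i\}_{i\in\mathbb{N}}$ a sequence of experiments in $X$. Let $\mathcal{V}$ be a compact set of continuous functions $X\to\mathbb{R}$ in the topology of uniform convergence on compact sets, and let $\Phi(\mathcal{V})$ be the set of preferences $\succeq_u$ (defined by $x\succeq_u y$ iff $u(x)\ge u(y)$) for $u\in\mathcal{V}$. Suppose every $\succeq\in\Phi(\mathcal{V})$ is locally strict. Let $c$ be a choice sequence and, for each $k$, let $\succeq_k\in\Phi(\mathcal{V})$ weakly rationalize the restriction of $c$ to $\Sigma_k$. Then there is $\succeq^*\in\Phi(\mathcal{V})$ with $\succeq_k\to\succeq^*$ in the topology of closed convergence. Furthermore, if $\succeq'_k\in\Phi(\mathcal{V})$ also weakly rationalizes the restriction of $c$ to $\Sigma_k$ for each $k$, then $\succeq'_k\to\succeq^*$.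
   Context: A preference $\succeq$ is locally strict if for all $x\succeq y$ and every neighborhood $V$ of $(x,y)$ in $X\times X$ there is $(x',y')\in V$ with $x'\succ y'$. A sequence of experiments is a sequence $\{B_i\}$ of unordered pairs $B_i\subseteq X$ such that $B=\bigcup_iB_i$ is dense in $X$ and for all $x,y\in B$ there is $k$ with $B_k=\{x,y\}$; $\Sigma_k=\{B_1,\dots,B_k\}$. A choice sequence is a map $c$ assigning to each $B_i$ a nonempty subset $c(B_i)\subseteq B_i$. With $c_{\succeq}(A)=\{x\in A:x\succeq y\ \forall y\in A\}$, $\succeq$ weakly rationalizes $c$ on $\Sigma_k$ if $c(B_i)\subseteq c_{\succeq}(B_i)$ for all $B_i\in\Sigma_k$. Closed convergence on closed subsets of $X\times X$: $F^n\to F$ iff $F$ equals both the set of points every neighborhood of which meets $F^n$ for all large $n$, and the set of points every neighborhood of which meets $F^n$ for infinitely many $n$. *)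

theory Defs
  imports "HOL-Analysis.Analysis"
begin

text \<open>Topology of uniform convergence on compact sets on the space of continuous
  real functions: generated by the sets of continuous v with |v x - u x| < e on a
  compact set K, for u continuous, K compact, e > 0; then restricted to C(X).\<close>
definition cc_topology :: "('a::topological_space \<Rightarrow> real) topology" where
  "cc_topology = subtopology
     (topology_generated_by
        {{v. \<forall>x\<in>K. \<bar>v x - u x\<bar> < e} | u K e. continuous_on UNIV u \<and> compact K \<and> e > 0})
     {u. continuous_on UNIV u}"

definition pref_of :: "('a \<Rightarrow> real) \<Rightarrow> ('a \<times> 'a) set" where
  "pref_of u = {(x, y). u x \<ge> u y}"

definition Phi :: "('a \<Rightarrow> real) set \<Rightarrow> ('a \<times> 'a) set set" where
  "Phi V = pref_of ` V"

definition strict_pref :: "('a \<times> 'a) set \<Rightarrow> 'a \<Rightarrow> 'a \<Rightarrow> bool" where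
  "strict_pref R x y \<longleftrightarrow> (x, y) \<in> R \<and> (y, x) \<notin> R"

definition locally_strict :: "('a::topological_space \<times> 'a) set \<Rightarrow> bool" where
  "locally_strict R \<longleftrightarrow> (\<forall>x y. (x, y) \<in> R \<longrightarrow>
     (\<forall>W. open W \<and> (x, y) \<in> W \<longrightarrow> (\<exists>(x', y')\<in>W. strict_pref R x' y')))"

definition experiments :: "(nat \<Rightarrow> 'a::topological_space set) \<Rightarrow> bool" where
  "experiments B \<longleftrightarrow> (\<forall>i. \<exists>x y. B i = {x, y}) \<and>
     closure (\<Union>i. B i) = UNIV \<and>
     (\<forall>x\<in>(\<Union>i. B i). \<forall>y\<in>(\<Union>i. B i). \<exists>k. B k = {x, y})"

definition choice_seq :: "(nat \<Rightarrow> 'a set) \<Rightarrow> ('a set \<Rightarrow> 'a set) \<Rightarrow> bool" where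
  "choice_seq B c \<longleftrightarrow> (\<forall>i. c (B i) \<noteq> {} \<and> c (B i) \<subseteq> B i)"

definition choice_by :: "('a \<times> 'a) set \<Rightarrow> 'a set \<Rightarrow> 'a set" where
  "choice_by R A = {x \<in> A. \<forall>y\<in>A. (x, y) \<in> R}"

text \<open>Sigma_k = {B_1,...,B_k}; with 0-based indexing these are B 0, ..., B (k-1).\<close>
definition weakly_rationalizes :: "('a \<times> 'a) set \<Rightarrow> (nat \<Rightarrow> 'a set) \<Rightarrow> ('a set \<Rightarrow> 'a set) \<Rightarrow> nat \<Rightarrow> bool" where
  "weakly_rationalizes R B c k \<longleftrightarrow> (\<forall>i<k. c (B i) \<subseteq> choice_by R (B i))"

definition lower_limit :: "(nat \<Rightarrow> 'b::topological_space set) \<Rightarrow> 'b set" where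
  "lower_limit F = {p. \<forall>U. open U \<and> p \<in> U \<longrightarrow> (\<forall>\<^sub>F n in sequentially. F n \<inter> U \<noteq> {})}"

definition upper_limit :: "(nat \<Rightarrow> 'b::topological_space set) \<Rightarrow> 'b set" where
  "upper_limit F = {p. \<forall>U. open U \<and> p \<in> U \<longrightarrow> (\<exists>\<^sub>F n in sequentially. F n \<inter> U \<noteq> {})}"

definition closed_converges :: "(nat \<Rightarrow> 'b::topological_space set) \<Rightarrow> 'b set \<Rightarrow> bool" where
  "closed_converges F G \<longleftrightarrow> G = lower_limit F \<and> G = upper_limit F"

end

theory Submission
  imports Defs
begin

definition rat_all :: "(nat \<Rightarrow> 'a set) \<Rightarrow> ('a set \<Rightarrow> 'a set) \<Rightarrow> ('a \<Rightarrow> real) \<Rightarrow> bool" where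
  "rat_all B c v \<longleftrightarrow> (\<forall>i. \<forall>a\<in>c (B i). \<forall>b\<in>B i. v b \<le> v a)"

lemma wr_pref:
  assumes "weakly_rationalizes (pref_of w) B c k" "i < k" "a \<in> c (B i)" "b \<in> B i"
  shows "w b \<le> w a"
  using assms unfolding weakly_rationalizes_def choice_by_def pref_of_def by blast

lemma cc_nbhd:
  fixes v :: "'a::topological_space \<Rightarrow> real"
  assumes "continuous_on UNIV v" "compact K" "e > 0"
  shows "openin cc_topology ({w. \<forall>x\<in>K. \<bar>w x - v x\<bar> < e} \<inter> {u. continuous_on UNIV u})"
    and "v \<in> {w. \<forall>x\<in>K. \<bar>w x - v x\<bar> < e} \<inter> {u. continuous_on UNIV u}"
proof -
  show "openin cc_topology ({w. \<forall>x\<in>K. \<bar>w x - v x\<bar> < e} \<inter> {u. continuous_on UNIV u})"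
    unfolding cc_topology_def
    apply (rule openin_subtopology_Int)
    apply (rule topology_generated_by_Basis)
    using assms by blast
  show "v \<in> {w. \<forall>x\<in>K. \<bar>w x - v x\<bar> < e} \<inter> {u. continuous_on UNIV u}"
    using assms by auto
qed

lemma dense_meet:
  assumes "closure S = UNIV" "open T" "x \<in> T"
  shows "\<exists>y\<in>S. y \<in> T"
  using assms open_Int_closure_eq_empty[of T S] by auto

lemma ident:
  fixes B :: "nat \<Rightarrow> 'a::topological_space set"
  assumes ex: "experiments B" and cs: "choice_seq B c"
    and cu: "continuous_on UNIV u" and cu': "continuous_on UNIV u'"
    and ru: "rat_all B c u" and ru': "rat_all B c u'"
    and ls: "locally_strict (pref_of u)"
  shows "pref_of u \<subseteq> pref_of u'"
proof
  fix p assume p: "p \<in> pref_of u"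
  obtain x y where pxy: "p = (x, y)" by (cases p)
  show "p \<in> pref_of u'"
  proof (rule ccontr)
    assume "p \<notin> pref_of u'"
    hence lt: "u' x < u' y" using pxy unfolding pref_of_def by auto
    define W where "W = {q :: 'a \<times> 'a. u' (fst q) < u' (snd q)}"
    have cW: "continuous_on UNIV (\<lambda>q::'a\<times>'a. u' (snd q) - u' (fst q))"
      by (intro continuous_intros continuous_on_compose2[OF cu'] ) auto
    have oW: "open W"
    proof -
      have "W = (\<lambda>q. u' (snd q) - u' (fst q)) -` {0<..}" unfolding W_def by auto
      thus ?thesis using open_vimage[OF _ cW] by auto
    qed
    have "(x, y) \<in> W" using lt unfolding W_def by auto
    then obtain x' y' where xy': "(x', y') \<in> W" "strict_pref (pref_of u) x' y'"
      using ls p pxy oW unfolding locally_strict_def by blast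
    hence "u y' < u x'" unfolding strict_pref_def pref_of_def by auto
    define W2 where "W2 = W \<inter> {q :: 'a \<times> 'a. u (snd q) < u (fst q)}"
    have cW2: "continuous_on UNIV (\<lambda>q::'a\<times>'a. u (fst q) - u (snd q))"
      by (intro continuous_intros continuous_on_compose2[OF cu] ) auto
    have oW2: "open W2"
    proof -
      have "{q :: 'a \<times> 'a. u (snd q) < u (fst q)} = (\<lambda>q. u (fst q) - u (snd q)) -` {0<..}" by auto
      thus ?thesis unfolding W2_def using open_vimage[OF _ cW2] oW by auto
    qed
    have "(x', y') \<in> W2" using xy' \<open>u y' < u x'\<close> unfolding W2_def by auto
    then obtain A1 A2 where A: "open A1" "open A2" "(x', y') \<in> A1 \<times> A2" "A1 \<times> A2 \<subseteq> W2"
      using open_prod_elim[OF oW2] by metis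
    have cl: "closure (\<Union>i. B i) = UNIV" using ex unfolding experiments_def by auto
    obtain a where a: "a \<in> (\<Union>i. B i)" "a \<in> A1" using dense_meet[OF cl A(1)] A(3) by blast
    obtain b where b: "b \<in> (\<Union>i. B i)" "b \<in> A2" using dense_meet[OF cl A(2)] A(3) by blast
    obtain k where k: "B k = {a, b}" using ex a b unfolding experiments_def by blast
    have abW: "(a, b) \<in> W2" using A a b by auto
    have "c (B k) \<noteq> {}" "c (B k) \<subseteq> B k" using cs unfolding choice_seq_def by auto
    then obtain z where z: "z \<in> c (B k)" "z = a \<or> z = b" using k by auto
    show False
    proof (cases "z = a")
      case True
      hence "u' b \<le> u' a" using ru' z k unfolding rat_all_def by fastforce
      thus False using abW unfolding W2_def W_def by auto
    next
      case False
      hence "z = b" using z by auto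
      hence "u a \<le> u b" using ru z k unfolding rat_all_def by fastforce
      thus False using abW unfolding W2_def by auto
    qed
  qed
qed


lemma cover:
  fixes u :: "nat \<Rightarrow> 'a::topological_space \<Rightarrow> real"
  assumes cV: "V \<subseteq> {u. continuous_on UNIV u}" and kV: "compactin cc_topology V"
    and uV: "\<forall>k. u k \<in> V \<and> weakly_rationalizes (pref_of (u k)) B c k"
    and good: "\<forall>v\<in>V. rat_all B c v \<longrightarrow> (\<exists>N. openin cc_topology N \<and> v \<in> N \<and> (\<forall>w\<in>N\<inter>V. S w))"
  shows "\<exists>m. \<forall>k\<ge>m. S (u k)"
proof -
  have loc: "\<exists>N m. openin cc_topology N \<and> v \<in> N \<and> (\<forall>k\<ge>m. u k \<in> N \<longrightarrow> S (u k))" if vV: "v \<in> V" for v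
  proof (cases "rat_all B c v")
    case True
    then obtain N where "openin cc_topology N" "v \<in> N" "\<forall>w\<in>N\<inter>V. S w" using good vV by blast
    thus ?thesis using uV by blast
  next
    case False
    then obtain i a b where iab: "a \<in> c (B i)" "b \<in> B i" "v a < v b" unfolding rat_all_def by force
    define e where "e = (v b - v a) / 2"
    have e: "e > 0" using iab unfolding e_def by auto
    have cv: "continuous_on UNIV v" using cV vV by auto
    define N where "N = {w. \<forall>x\<in>{a,b}. \<bar>w x - v x\<bar> < e} \<inter> {u. continuous_on UNIV u}"
    have "openin cc_topology N" "v \<in> N" unfolding N_def using cc_nbhd[OF cv _ e, of "{a,b}"] by auto
    moreover have "\<forall>k\<ge>Suc i. u k \<in> N \<longrightarrow> S (u k)"
    proof (intro allI impI)
      fix k assume k: "Suc i \<le> k" "u k \<in> N"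
      have "u k b \<le> u k a" using wr_pref[of "u k" B c k i a b] uV iab k by auto
      moreover have "\<bar>u k a - v a\<bar> < e" "\<bar>u k b - v b\<bar> < e" using k unfolding N_def by auto
      moreover have "\<bar>u k a - v a\<bar> < e" "\<bar>u k b - v b\<bar> < e" using k unfolding N_def by auto
      ultimately have "u k a < v a + e" "v b - e < u k b" "u k b \<le> u k a" by linarith+
      hence False using e_def by (simp add: field_simps)
      thus "S (u k)" by blast
    qed
    ultimately show ?thesis by blast
  qed
  then obtain N m where Nm: "\<And>v. v \<in> V \<Longrightarrow> openin cc_topology (N v) \<and> v \<in> N v \<and> (\<forall>k\<ge>m v. u k \<in> N v \<longrightarrow> S (u k))"
    by metis
  have "V \<subseteq> \<Union>(N ` V)" using Nm by blast
  moreover have "\<forall>U\<in>N ` V. openin cc_topology U" using Nm by blast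
  ultimately obtain F where F: "finite F" "F \<subseteq> N ` V" "V \<subseteq> \<Union>F"
    using kV unfolding compactin_def by meson
  then obtain F' where F': "F' \<subseteq> V" "finite F'" "F = N ` F'" by (meson finite_subset_image)
  show ?thesis
  proof (intro exI allI impI)
    fix k assume k: "sum m F' \<le> k"
    have "u k \<in> V" using uV by auto
    then obtain v where v: "v \<in> F'" "u k \<in> N v" using F F' by auto
    have "m v \<le> sum m F'" using member_le_sum[OF v(1), of m] F' by auto
    thus "S (u k)" using Nm[of v] v F' k by auto
  qed
qed


lemma lc_nbhd:
  fixes x :: "'a::topological_space"
  assumes lc: "locally_compact_space (euclidean :: 'a topology)"
  obtains U K where "open U" "compact K" "x \<in> U" "U \<subseteq> K"
  using lc unfolding locally_compact_space_def by (metis UNIV_I compactin_euclidean_iff open_openin topspace_euclidean)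

lemma conv:
  fixes u :: "nat \<Rightarrow> 'a::polish_space \<Rightarrow> real"
  assumes lc: "locally_compact_space (euclidean :: 'a topology)"
    and ex: "experiments B"
    and cV: "V \<subseteq> {u. continuous_on UNIV u}"
    and kV: "compactin cc_topology V"
    and ls: "\<forall>P\<in>Phi V. locally_strict P"
    and cs: "choice_seq B c"
    and uV: "\<forall>k. u k \<in> V \<and> weakly_rationalizes (pref_of (u k)) B c k"
    and usV: "us \<in> V" and rus: "rat_all B c us"
  shows "closed_converges (\<lambda>k. pref_of (u k)) (pref_of us)"
proof -
  define P where "P = pref_of us"
  have cus: "continuous_on UNIV us" using cV usV by auto
  have same: "pref_of v = P" if "v \<in> V" "rat_all B c v" for v
  proof -
    have "continuous_on UNIV v" using cV that by auto
    moreover have "locally_strict (pref_of v)" "locally_strict (pref_of us)"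
      using ls that usV unfolding Phi_def by auto
    ultimately show ?thesis unfolding P_def
      using ident[OF ex cs _ cus] ident[OF ex cs cus] that rus by blast
  qed
  have low: "P \<subseteq> lower_limit (\<lambda>k. pref_of (u k))"
  proof
    fix p assume pP: "p \<in> P"
    show "p \<in> lower_limit (\<lambda>k. pref_of (u k))"
      unfolding lower_limit_def
    proof (intro CollectI allI impI)
      fix U :: "('a \<times> 'a) set" assume U: "open U \<and> p \<in> U"
      have "locally_strict P" using ls usV unfolding Phi_def P_def by auto
      then obtain x' y' where xy': "(x', y') \<in> U" "strict_pref P x' y'"
        using pP U unfolding locally_strict_def by (cases p) blast
      have "\<exists>m. \<forall>k\<ge>m. u k y' < u k x'"
      proof (rule cover[OF cV kV uV], intro ballI impI)
        fix v assume v: "v \<in> V" "rat_all B c v"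
        hence "strict_pref (pref_of v) x' y'" using same xy' by auto
        hence lt: "v y' < v x'" unfolding strict_pref_def pref_of_def by auto
        define e where "e = (v x' - v y') / 2"
        have e: "e > 0" using lt unfolding e_def by auto
        have cv: "continuous_on UNIV v" using cV v by auto
        define N where "N = {w. \<forall>z\<in>{x',y'}. \<bar>w z - v z\<bar> < e} \<inter> {u. continuous_on UNIV u}"
        have "openin cc_topology N" "v \<in> N" unfolding N_def using cc_nbhd[OF cv _ e, of "{x',y'}"] by auto
        moreover have "\<forall>w\<in>N \<inter> V. w y' < w x'"
        proof
          fix w assume "w \<in> N \<inter> V"
          hence "\<bar>w x' - v x'\<bar> < e" "\<bar>w y' - v y'\<bar> < e" unfolding N_def by auto
          hence "v x' - e < w x'" "w y' < v y' + e" by linarith+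
          thus "w y' < w x'" unfolding e_def by (simp add: field_simps)
        qed
        ultimately show "\<exists>N. openin cc_topology N \<and> v \<in> N \<and> (\<forall>w\<in>N \<inter> V. w y' < w x')" by blast
      qed
      then obtain m where m: "\<forall>k\<ge>m. u k y' < u k x'" by blast
      show "\<forall>\<^sub>F n in sequentially. pref_of (u n) \<inter> U \<noteq> {}"
      proof (rule eventually_sequentiallyI[of m])
        fix k assume "m \<le> k"
        hence "(x', y') \<in> pref_of (u k)" using m unfolding pref_of_def by auto
        thus "pref_of (u k) \<inter> U \<noteq> {}" using xy' by blast
      qed
    qed
  qed
  have up: "upper_limit (\<lambda>k. pref_of (u k)) \<subseteq> P"
  proof
    fix p assume pU: "p \<in> upper_limit (\<lambda>k. pref_of (u k))"
    obtain x y where pxy: "p = (x, y)" by (cases p)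
    show "p \<in> P"
    proof (rule ccontr)
      assume "p \<notin> P"
      hence lt: "us x < us y" using pxy unfolding P_def pref_of_def by auto
      define d where "d = us y - us x"
      have d: "d > 0" using lt unfolding d_def by auto
      obtain Ux Kx where Ux: "open Ux" "compact Kx" "x \<in> Ux" "Ux \<subseteq> Kx" using lc_nbhd[OF lc] by blast
      obtain Uy Ky where Uy: "open Uy" "compact Ky" "y \<in> Uy" "Uy \<subseteq> Ky" using lc_nbhd[OF lc] by blast
      define Kx' where "Kx' = Kx \<inter> {a. us a \<le> us x + d/3}"
      define Ky' where "Ky' = Ky \<inter> {b. us y - d/3 \<le> us b}"
      define Ux' where "Ux' = Ux \<inter> {a. us a < us x + d/3}"
      define Uy' where "Uy' = Uy \<inter> {b. us y - d/3 < us b}"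
      have cKx: "compact Kx'" unfolding Kx'_def
        by (intro compact_Int_closed Ux(2) closed_Collect_le continuous_intros cus) 
      have cKy: "compact Ky'" unfolding Ky'_def
        by (intro compact_Int_closed Uy(2) closed_Collect_le continuous_intros cus)
      have oUx: "open Ux'" unfolding Ux'_def
        by (intro open_Int Ux(1) open_Collect_less continuous_intros cus)
      have oUy: "open Uy'" unfolding Uy'_def
        by (intro open_Int Uy(1) open_Collect_less continuous_intros cus)
      have UK: "Ux' \<subseteq> Kx'" "Uy' \<subseteq> Ky'" using Ux Uy unfolding Ux'_def Kx'_def Uy'_def Ky'_def by auto
      have pin: "p \<in> Ux' \<times> Uy'" using pxy Ux Uy d unfolding Ux'_def Uy'_def by auto
      have xyK: "x \<in> Kx'" "y \<in> Ky'" using pin UK pxy by auto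
      have usab: "us a < us b" if "a \<in> Kx'" "b \<in> Ky'" for a b
      proof -
        have "us a \<le> us x + d/3" "us y - d/3 \<le> us b" using that unfolding Kx'_def Ky'_def by auto
        thus ?thesis using d unfolding d_def by (simp add: field_simps)
      qed
      have "\<exists>m. \<forall>k\<ge>m. (\<forall>a\<in>Kx'. \<forall>b\<in>Ky'. u k a < u k b)"
      proof (rule cover[OF cV kV uV], intro ballI impI)
        fix v assume v: "v \<in> V" "rat_all B c v"
        have vab: "v a < v b" if "a \<in> Kx'" "b \<in> Ky'" for a b
        proof -
          have "(a, b) \<notin> P" using usab[OF that] unfolding P_def pref_of_def by auto
          thus ?thesis using same[OF v] unfolding pref_of_def by auto
        qed
        have cv: "continuous_on UNIV v" using cV v by auto
        have cf: "continuous_on (Kx' \<times> Ky') (\<lambda>q. v (snd q) - v (fst q))"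
          by (intro continuous_intros continuous_on_compose2[OF cv]) auto
        obtain q0 where q0: "q0 \<in> Kx' \<times> Ky'" "\<forall>q\<in>Kx' \<times> Ky'. v (snd q0) - v (fst q0) \<le> v (snd q) - v (fst q)"
          using continuous_attains_inf[OF compact_Times[OF cKx cKy] _ cf] xyK by blast
        define e where "e = (v (snd q0) - v (fst q0)) / 2"
        have e: "e > 0" using vab q0(1) unfolding e_def by (cases q0) auto
        define N where "N = {w. \<forall>z\<in>Kx' \<union> Ky'. \<bar>w z - v z\<bar> < e} \<inter> {u. continuous_on UNIV u}"
        have "openin cc_topology N" "v \<in> N" unfolding N_def
          using cc_nbhd[OF cv _ e, of "Kx' \<union> Ky'"] cKx cKy by auto
        moreover have "\<forall>w\<in>N \<inter> V. \<forall>a\<in>Kx'. \<forall>b\<in>Ky'. w a < w b"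
        proof (intro ballI)
          fix w a b assume w: "w \<in> N \<inter> V" and ab: "a \<in> Kx'" "b \<in> Ky'"
          hence "\<bar>w a - v a\<bar> < e" "\<bar>w b - v b\<bar> < e" unfolding N_def by auto
          hence "w a < v a + e" "v b - e < w b" by linarith+
          moreover have "2 * e \<le> v b - v a" using q0(2) ab unfolding e_def by fastforce
          ultimately show "w a < w b" by linarith
        qed
        ultimately show "\<exists>N. openin cc_topology N \<and> v \<in> N \<and> (\<forall>w\<in>N \<inter> V. \<forall>a\<in>Kx'. \<forall>b\<in>Ky'. w a < w b)" by blast
      qed
      then obtain m where m: "\<forall>k\<ge>m. \<forall>a\<in>Kx'. \<forall>b\<in>Ky'. u k a < u k b" by blast
      have ev: "\<forall>\<^sub>F n in sequentially. \<not> (pref_of (u n) \<inter> (Ux' \<times> Uy') \<noteq> {})"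
      proof (rule eventually_sequentiallyI[of m])
        fix k assume "m \<le> k"
        thus "\<not> (pref_of (u k) \<inter> (Ux' \<times> Uy') \<noteq> {})" using m UK unfolding pref_of_def by fastforce
      qed
      have "\<exists>\<^sub>F n in sequentially. pref_of (u n) \<inter> (Ux' \<times> Uy') \<noteq> {}"
        using pU pin open_Times[OF oUx oUy] unfolding upper_limit_def by blast
      thus False using ev unfolding frequently_def by blast
    qed
  qed
  have lu: "lower_limit (\<lambda>k. pref_of (u k)) \<subseteq> upper_limit (\<lambda>k. pref_of (u k))"
    unfolding lower_limit_def upper_limit_def using eventually_frequently[OF trivial_limit_sequentially] by auto
  show ?thesis unfolding closed_converges_def P_def[symmetric] using low up lu by blast
qed


theorem theorem11:
  fixes B :: "nat \<Rightarrow> 'a::polish_space set"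
    and V :: "('a \<Rightarrow> real) set"
    and c :: "'a set \<Rightarrow> 'a set"
    and R :: "nat \<Rightarrow> ('a \<times> 'a) set"
  assumes "locally_compact_space (euclidean :: 'a topology)"
    and "experiments B"
    and "V \<subseteq> {u. continuous_on UNIV u}"
    and "compactin cc_topology V"
    and "\<forall>P\<in>Phi V. locally_strict P"
    and "choice_seq B c"
    and "\<forall>k. R k \<in> Phi V \<and> weakly_rationalizes (R k) B c k"
  shows "\<exists>Rs\<in>Phi V. closed_converges R Rs \<and>
           (\<forall>R'. (\<forall>k. R' k \<in> Phi V \<and> weakly_rationalizes (R' k) B c k)
                   \<longrightarrow> closed_converges R' Rs)"
proof -
  have repr: "\<exists>u. \<forall>k. u k \<in> V \<and> weakly_rationalizes (pref_of (u k)) B c k \<and> R' k = pref_of (u k)"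
    if "\<forall>k. R' k \<in> Phi V \<and> weakly_rationalizes (R' k) B c k" for R'
  proof -
    have "\<forall>k. \<exists>w. w \<in> V \<and> R' k = pref_of w" using that unfolding Phi_def by blast
    then obtain u where "\<forall>k. u k \<in> V \<and> R' k = pref_of (u k)" by metis
    thus ?thesis using that by metis
  qed
  obtain u where u: "\<forall>k. u k \<in> V \<and> weakly_rationalizes (pref_of (u k)) B c k \<and> R k = pref_of (u k)"
    using repr[OF assms(7)] by blast
  have uV: "\<forall>k. u k \<in> V \<and> weakly_rationalizes (pref_of (u k)) B c k" using u by blast
  have "\<exists>us\<in>V. rat_all B c us"
  proof (rule ccontr)
    assume "\<not> (\<exists>us\<in>V. rat_all B c us)"
    hence "\<exists>m. \<forall>k\<ge>m. False"
      using cover[OF assms(3) assms(4) uV, of "\<lambda>_. False"] by blast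
    thus False by blast
  qed
  then obtain us where us: "us \<in> V" "rat_all B c us" by blast
  have Rc: "closed_converges R (pref_of us)"
  proof -
    have "R = (\<lambda>k. pref_of (u k))" using u by auto
    thus ?thesis using conv[OF assms(1-6) uV us] by simp
  qed
  have R'c: "closed_converges R' (pref_of us)"
    if hR': "\<forall>k. R' k \<in> Phi V \<and> weakly_rationalizes (R' k) B c k" for R'
  proof -
    obtain u' where u': "\<forall>k. u' k \<in> V \<and> weakly_rationalizes (pref_of (u' k)) B c k \<and> R' k = pref_of (u' k)"
      using repr[OF hR'] by blast
    have "R' = (\<lambda>k. pref_of (u' k))" using u' by auto
    moreover have "\<forall>k. u' k \<in> V \<and> weakly_rationalizes (pref_of (u' k)) B c k" using u' by blast
    ultimately show ?thesis using conv[OF assms(1-6) _ us] by simp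
  qed
  have "pref_of us \<in> Phi V" using us unfolding Phi_def by auto
  thus ?thesis using Rc R'c by blast
qed

end
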